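(* Assume $\rho_\alpha^{\mathrm{dir}}<1$, let $\theta^\star$ be the unique projected Bellman fixed point, and let $x_k:=\theta_k-\theta^\star$. Fix $\varepsilon>0$ with $\beta_\varepsilon:=\rho_\alpha^{\mathrm{dir}}+\varepsilon<1$, and let $p_\varepsilon$ and $C_\varepsilon$ be as described in the context. Then for every $k\ge0$, \[ \mathbb E[p_\varepsilon(w_k)\mid\mathcal F_k]\le2\sqrt{C_\varepsilon}\,\phi_{\max}\big(R_{\max}+(1+\gamma)\|\Phi\theta^\star\|_\infty\big)+2\sqrt{C_\varepsilon}(1+\gamma)\phi_{\max}^2\,p_\varepsilon(x_k). \]
   Context: Consider a finite discounted MDP with state space $\mathcal S=\{1,\dots,|\mathcal S|\}$, action space $\mathcal A=\{1,\dots,|\mathcal A|\}$, transition probabilities $P(s'\mid s,a)$, real rewards $r(s,a,s')$, expected reward $R(s,a)=\sum_{s'}P(s'\mid s,a)r(s,a,s')$, and discount factor $\gamma\in(0,1)$. Let $R_{\max}:=\max|r(s,a,s')|$. State-action vectors are ordered as $(1,1),(2,1),\dots,(|\mathcal S|,1),(1,2),\dots$. The matrix $P$ has rows $P(\cdot\mid s,a)$, and $R$ has entries $R(s,a)$. The set $\Theta$ is the set of deterministic stationary policies $\pi:\mathcal S\to\mathcal A$. For $\pi\in\Theta$, $\Pi^\pi$ has entry $1$ at row $s$, column $(s,\pi(s))$, and zeros elsewhere. The feature matrix $\Phi$ has full column rank and rows $\phi(s,a)^\top$. Let $\phi_{\max}:=\max\|\phi(s,a)\|_2$, and define $V_\theta(s):=\max_a\phi(s,a)^\top\theta$.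 The distribution $d>0$ on $\mathcal S\times\mathcal A$ gives $D=\mathrm{diag}(d)$. The step size is $\alpha\in(0,1)$. Define $g(\theta):=\Phi^\top D(R+\gamma PV_\theta-\Phi\theta)$; a projected Bellman fixed point is a $\theta^\star$ with $g(\theta^\star)=0$. Define $A_\pi:=I-\alpha\Phi^\top D\Phi+\alpha\gamma\Phi^\top DP\Pi^\pi\Phi$, and let $\rho_\alpha^{\mathrm{dir}}$ be the joint spectral radius $\lim_k\max_{\pi_i\in\Theta}\|A_{\pi_k}\cdots A_{\pi_1}\|^{1/k}$. When $\rho_\alpha^{\mathrm{dir}}<1$, a unique projected Bellman fixed point exists. Lyapunov norm: define \[ V_\varepsilon^\infty(x):=\lim_{t\to\infty}\sum_{\ell=0}^t\beta_\varepsilon^{-2\ell}\max_{\pi_1,\dots,\pi_\ell\in\Theta}\|A_{\pi_\ell}\cdots A_{\pi_1}x\|_2^2, \] where the $\ell=0$ term is $\|x\|_2^2$, and $p_\varepsilon:=\sqrt{V_\varepsilon^\infty}$ (a norm). Let $C_\varepsilon\ge1$ satisfy $\|x\|_2^2\le V^\infty_\varepsilon(x)\le C_\varepsilon\|x\|_2^2$ for all $x$. i.i.d. sampling: $\theta_0$ is deterministic. At each time $k$, $(s_k,a_k)$ is drawn i.i.d. from $d$, $s'_k\sim P(\cdot\mid s_k,a_k)$, and $r_{k+1}=r(s_k,a_k,s'_k)$. The filtration is $\mathcal F_0=\sigma(\theta_0)$ and $\mathcal F_k=\sigma(\theta_0,\{(s_t,a_t,s'_t,r_{t+1}):t\le k-1\})$.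 Define $\widehat g_k(\theta):=\phi(s_k,a_k)(r_{k+1}+\gamma\max_u\phi(s'_k,u)^\top\theta-\phi(s_k,a_k)^\top\theta)$, the update $\theta_{k+1}=\theta_k+\alpha\widehat g_k(\theta_k)$, and $w_k:=\widehat g_k(\theta_k)-g(\theta_k)$. *)

theory Defs
  imports "HOL-Analysis.Analysis" "HOL-Probability.Probability"
begin

text \<open>States: finite type 's; actions: finite type 'a; features: real^'n.
  P s a s' = P(s'|s,a); r s a s' reward; d s a sampling distribution;
  phi s a = feature vector phi(s,a).\<close>

definition Vtheta :: "('s \<Rightarrow> 'a::finite \<Rightarrow> real^'n) \<Rightarrow> real^'n \<Rightarrow> 's \<Rightarrow> real" where
  "Vtheta phi \<theta> s = Max (range (\<lambda>a. phi s a \<bullet> \<theta>))"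

definition Rexp :: "('s::finite \<Rightarrow> 'a \<Rightarrow> 's \<Rightarrow> real) \<Rightarrow> ('s \<Rightarrow> 'a \<Rightarrow> 's \<Rightarrow> real) \<Rightarrow> 's \<Rightarrow> 'a \<Rightarrow> real" where
  "Rexp P r s a = (\<Sum>s'\<in>UNIV. P s a s' * r s a s')"

text \<open>g(theta) = Phi^T D (R + gamma P V_theta - Phi theta)\<close>
definition gbar :: "('s::finite \<Rightarrow> 'a::finite \<Rightarrow> 's \<Rightarrow> real) \<Rightarrow> ('s \<Rightarrow> 'a \<Rightarrow> 's \<Rightarrow> real) \<Rightarrow> ('s \<Rightarrow> 'a \<Rightarrow> real)
    \<Rightarrow> ('s \<Rightarrow> 'a \<Rightarrow> real^'n) \<Rightarrow> real \<Rightarrow> real^'n \<Rightarrow> real^'n" where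
  "gbar P r d phi \<gamma> \<theta> = (\<Sum>s\<in>UNIV. \<Sum>a\<in>UNIV.
      (d s a * (Rexp P r s a + \<gamma> * (\<Sum>s'\<in>UNIV. P s a s' * Vtheta phi \<theta> s') - phi s a \<bullet> \<theta>)) *\<^sub>R phi s a)"

text \<open>A_pi x = (I - alpha Phi^T D Phi + alpha gamma Phi^T D P Pi^pi Phi) x\<close>
definition Aop :: "('s::finite \<Rightarrow> 'a::finite \<Rightarrow> 's \<Rightarrow> real) \<Rightarrow> ('s \<Rightarrow> 'a \<Rightarrow> real)
    \<Rightarrow> ('s \<Rightarrow> 'a \<Rightarrow> real^'n) \<Rightarrow> real \<Rightarrow> real \<Rightarrow> ('s \<Rightarrow> 'a) \<Rightarrow> real^'n \<Rightarrow> real^'n" where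
  "Aop P d phi \<alpha> \<gamma> \<pi> x = x
     - \<alpha> *\<^sub>R (\<Sum>s\<in>UNIV. \<Sum>a\<in>UNIV. (d s a * (phi s a \<bullet> x)) *\<^sub>R phi s a)
     + (\<alpha> * \<gamma>) *\<^sub>R (\<Sum>s\<in>UNIV. \<Sum>a\<in>UNIV.
          (d s a * (\<Sum>s'\<in>UNIV. P s a s' * (phi s' (\<pi> s') \<bullet> x))) *\<^sub>R phi s a)"

text \<open>Aprod [pi_1,...,pi_k] = A_{pi_k} ... A_{pi_1} (pi_1 applied first).\<close>
definition Aprod :: "('s::finite \<Rightarrow> 'a::finite \<Rightarrow> 's \<Rightarrow> real) \<Rightarrow> ('s \<Rightarrow> 'a \<Rightarrow> real)
    \<Rightarrow> ('s \<Rightarrow> 'a \<Rightarrow> real^'n) \<Rightarrow> real \<Rightarrow> real \<Rightarrow> ('s \<Rightarrow> 'a) list \<Rightarrow> real^'n \<Rightarrow> real^'n" where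
  "Aprod P d phi \<alpha> \<gamma> ps x = fold (\<lambda>\<pi> y. Aop P d phi \<alpha> \<gamma> \<pi> y) ps x"

definition rho_dir :: "('s::finite \<Rightarrow> 'a::finite \<Rightarrow> 's \<Rightarrow> real) \<Rightarrow> ('s \<Rightarrow> 'a \<Rightarrow> real)
    \<Rightarrow> ('s \<Rightarrow> 'a \<Rightarrow> real^'n) \<Rightarrow> real \<Rightarrow> real \<Rightarrow> real" where
  "rho_dir P d phi \<alpha> \<gamma> = lim (\<lambda>k. Max {onorm (Aprod P d phi \<alpha> \<gamma> ps) powr (1 / real k) | ps. length ps = k})"

definition Vinf :: "('s::finite \<Rightarrow> 'a::finite \<Rightarrow> 's \<Rightarrow> real) \<Rightarrow> ('s \<Rightarrow> 'a \<Rightarrow> real)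
    \<Rightarrow> ('s \<Rightarrow> 'a \<Rightarrow> real^'n) \<Rightarrow> real \<Rightarrow> real \<Rightarrow> real \<Rightarrow> real^'n \<Rightarrow> real" where
  "Vinf P d phi \<alpha> \<gamma> \<beta> x = lim (\<lambda>t. \<Sum>l\<le>t. inverse \<beta> ^ (2 * l) *
       Max {(norm (Aprod P d phi \<alpha> \<gamma> ps x))\<^sup>2 | ps. length ps = l})"

definition pnorm :: "('s::finite \<Rightarrow> 'a::finite \<Rightarrow> 's \<Rightarrow> real) \<Rightarrow> ('s \<Rightarrow> 'a \<Rightarrow> real)
    \<Rightarrow> ('s \<Rightarrow> 'a \<Rightarrow> real^'n) \<Rightarrow> real \<Rightarrow> real \<Rightarrow> real \<Rightarrow> real^'n \<Rightarrow> real" where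
  "pnorm P d phi \<alpha> \<gamma> \<beta> x = sqrt (Vinf P d phi \<alpha> \<gamma> \<beta> x)"

definition Rmax :: "('s::finite \<Rightarrow> 'a::finite \<Rightarrow> 's \<Rightarrow> real) \<Rightarrow> real" where
  "Rmax r = Max {\<bar>r s a s'\<bar> | s a s'. True}"

definition phimax :: "('s::finite \<Rightarrow> 'a::finite \<Rightarrow> real^'n) \<Rightarrow> real" where
  "phimax phi = Max {norm (phi s a) | s a. True}"

definition Phi_inf :: "('s::finite \<Rightarrow> 'a::finite \<Rightarrow> real^'n) \<Rightarrow> real^'n \<Rightarrow> real" where
  "Phi_inf phi \<theta> = Max {\<bar>phi s a \<bullet> \<theta>\<bar> | s a. True}"

definition ghat :: "('s \<Rightarrow> 'a \<Rightarrow> 's \<Rightarrow> real) \<Rightarrow> ('s \<Rightarrow> 'a::finite \<Rightarrow> real^'n) \<Rightarrow> real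
    \<Rightarrow> 's \<Rightarrow> 'a \<Rightarrow> 's \<Rightarrow> real^'n \<Rightarrow> real^'n" where
  "ghat r phi \<gamma> s a s' \<theta> = (r s a s' + \<gamma> * Vtheta phi \<theta> s' - phi s a \<bullet> \<theta>) *\<^sub>R phi s a"

primrec theta_it :: "('s \<Rightarrow> 'a \<Rightarrow> 's \<Rightarrow> real) \<Rightarrow> ('s \<Rightarrow> 'a::finite \<Rightarrow> real^'n) \<Rightarrow> real \<Rightarrow> real
    \<Rightarrow> real^'n \<Rightarrow> (nat \<Rightarrow> 'm \<Rightarrow> 's) \<Rightarrow> (nat \<Rightarrow> 'm \<Rightarrow> 'a) \<Rightarrow> (nat \<Rightarrow> 'm \<Rightarrow> 's) \<Rightarrow> nat \<Rightarrow> 'm \<Rightarrow> real^'n" where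
  "theta_it r phi \<alpha> \<gamma> \<theta>0 S Ac S' 0 \<omega> = \<theta>0"
| "theta_it r phi \<alpha> \<gamma> \<theta>0 S Ac S' (Suc k) \<omega> =
     theta_it r phi \<alpha> \<gamma> \<theta>0 S Ac S' k \<omega>
     + \<alpha> *\<^sub>R ghat r phi \<gamma> (S k \<omega>) (Ac k \<omega>) (S' k \<omega>) (theta_it r phi \<alpha> \<gamma> \<theta>0 S Ac S' k \<omega>)"

text \<open>Filtration F_k generated by the samples (s_t,a_t,s'_t), t < k
  (r_{t+1} is a function of them; theta_0 is deterministic).\<close>
definition filt :: "'m measure \<Rightarrow> (nat \<Rightarrow> 'm \<Rightarrow> 's) \<Rightarrow> (nat \<Rightarrow> 'm \<Rightarrow> 'a) \<Rightarrow> (nat \<Rightarrow> 'm \<Rightarrow> 's) \<Rightarrow> nat \<Rightarrow> 'm measure" where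
  "filt M S Ac S' k = sigma (space M)
     (\<Union>t\<in>{..<k}. {(\<lambda>\<omega>. (S t \<omega>, Ac t \<omega>, S' t \<omega>)) -` B \<inter> space M | B. True})"

end

theory Submission imports Defs begin

lemma phimax_ge: "norm (phi s a) \<le> phimax (phi :: 's::finite \<Rightarrow> 'a::finite \<Rightarrow> real^'n)"
proof -
  have e: "{norm (phi s a) | s a. True} = (\<lambda>p. norm (phi (fst p) (snd p))) ` UNIV" by (auto simp: image_iff split_paired_Ex) blast+
  have m: "norm (phi s a) \<in> (\<lambda>p. norm (phi (fst p) (snd p))) ` UNIV" by (rule image_eqI[where x="(s,a)"]) auto
  show ?thesis unfolding phimax_def e by (rule Max_ge[OF _ m]) auto
qed

lemma Rmax_ge: "\<bar>r s a s'\<bar> \<le> Rmax (r :: 's::finite \<Rightarrow> 'a::finite \<Rightarrow> 's \<Rightarrow> real)"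
proof -
  have e: "{\<bar>r s a s'\<bar> | s a s'. True} = (\<lambda>p. \<bar>r (fst p) (fst (snd p)) (snd (snd p))\<bar>) ` UNIV" by (auto simp: image_iff split_paired_Ex) blast+
  have m: "\<bar>r s a s'\<bar> \<in> (\<lambda>p. \<bar>r (fst p) (fst (snd p)) (snd (snd p))\<bar>) ` UNIV" by (rule image_eqI[where x="(s,a,s')"]) auto
  show ?thesis unfolding Rmax_def e by (rule Max_ge[OF _ m]) auto
qed

lemma Phi_inf_ge: "\<bar>phi s a \<bullet> \<theta>\<bar> \<le> Phi_inf (phi :: 's::finite \<Rightarrow> 'a::finite \<Rightarrow> real^'n) \<theta>"
proof -
  have e: "{\<bar>phi s a \<bullet> \<theta>\<bar> | s a. True} = (\<lambda>p. \<bar>phi (fst p) (snd p) \<bullet> \<theta>\<bar>) ` UNIV" by (auto simp: image_iff split_paired_Ex) blast+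
  have m: "\<bar>phi s a \<bullet> \<theta>\<bar> \<in> (\<lambda>p. \<bar>phi (fst p) (snd p) \<bullet> \<theta>\<bar>) ` UNIV" by (rule image_eqI[where x="(s,a)"]) auto
  show ?thesis unfolding Phi_inf_def e by (rule Max_ge[OF _ m]) auto
qed

lemma Vtheta_ex: "\<exists>a. Vtheta (phi :: 's \<Rightarrow> 'a::finite \<Rightarrow> real^'n) \<theta> s = phi s a \<bullet> \<theta>"
proof -
  have "Max (range (\<lambda>a. phi s a \<bullet> \<theta>)) \<in> range (\<lambda>a. phi s a \<bullet> \<theta>)" by (rule Max_in) auto
  then obtain a where "Max (range (\<lambda>a. phi s a \<bullet> \<theta>)) = phi s a \<bullet> \<theta>" by (rule rangeE)
  then show ?thesis unfolding Vtheta_def by blast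
qed

lemma inner_bound:
  "\<bar>phi s a \<bullet> \<theta>\<bar> \<le> Phi_inf (phi :: 's::finite \<Rightarrow> 'a::finite \<Rightarrow> real^'n) ts + phimax phi * norm (\<theta> - ts)"
proof -
  have "phi s a \<bullet> \<theta> = phi s a \<bullet> ts + phi s a \<bullet> (\<theta> - ts)" by (simp add: inner_diff_right)
  moreover have "\<bar>phi s a \<bullet> (\<theta> - ts)\<bar> \<le> norm (phi s a) * norm (\<theta> - ts)" by (rule Cauchy_Schwarz_ineq2)
  moreover have "norm (phi s a) * norm (\<theta> - ts) \<le> phimax phi * norm (\<theta> - ts)"
    by (rule mult_right_mono[OF phimax_ge]) simp
  moreover note Phi_inf_ge[of phi s a ts]
  ultimately show ?thesis by linarith
qed

lemma V_bound:
  "\<bar>Vtheta phi \<theta> s\<bar> \<le> Phi_inf (phi :: 's::finite \<Rightarrow> 'a::finite \<Rightarrow> real^'n) ts + phimax phi * norm (\<theta> - ts)"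
  using Vtheta_ex[of phi \<theta> s] inner_bound by metis

lemma ghat_bound:
  fixes phi :: "'s::finite \<Rightarrow> 'a::finite \<Rightarrow> real^'n"
  assumes "0 \<le> \<gamma>"
  shows "norm (ghat r phi \<gamma> s a s' \<theta>) \<le> phimax phi * (Rmax r + (1 + \<gamma>) * Phi_inf phi ts)
     + (1 + \<gamma>) * (phimax phi)\<^sup>2 * norm (\<theta> - ts)"
proof -
  let ?c = "r s a s' + \<gamma> * Vtheta phi \<theta> s' - phi s a \<bullet> \<theta>"
  let ?K = "Phi_inf phi ts + phimax phi * norm (\<theta> - ts)"
  have "\<bar>\<gamma> * Vtheta phi \<theta> s'\<bar> \<le> \<gamma> * ?K"
    using V_bound[of phi \<theta> s' ts] assms by (simp add: abs_mult mult_left_mono)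
  then have c: "\<bar>?c\<bar> \<le> Rmax r + \<gamma> * ?K + ?K"
    using Rmax_ge[of r s a s'] inner_bound[of phi s a \<theta> ts] by linarith
  have "norm (ghat r phi \<gamma> s a s' \<theta>) = \<bar>?c\<bar> * norm (phi s a)" unfolding ghat_def by simp
  also have "\<dots> \<le> (Rmax r + \<gamma> * ?K + ?K) * phimax phi"
    using c abs_ge_zero[of ?c] norm_ge_zero[of "phi s a"] by (intro mult_mono[OF c phimax_ge]) linarith+
  also have "\<dots> = phimax phi * (Rmax r + (1 + \<gamma>) * Phi_inf phi ts)
     + (1 + \<gamma>) * (phimax phi)\<^sup>2 * norm (\<theta> - ts)" by (simp add: algebra_simps power2_eq_square)
  finally show ?thesis .
qed

lemma gbar_eq:
  fixes phi :: "'s::finite \<Rightarrow> 'a::finite \<Rightarrow> real^'n"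
  assumes "\<forall>s a. (\<Sum>s'\<in>UNIV. P s a s') = 1"
  shows "gbar P r d phi \<gamma> \<theta> = (\<Sum>s\<in>UNIV. \<Sum>a\<in>UNIV. \<Sum>s'\<in>UNIV. (d s a * P s a s') *\<^sub>R ghat r phi \<gamma> s a s' \<theta>)"
  unfolding gbar_def
proof (intro sum.cong refl)
  fix s a
  have "(\<Sum>s'\<in>UNIV. (d s a * P s a s') *\<^sub>R ghat r phi \<gamma> s a s' \<theta>)
     = (\<Sum>s'\<in>UNIV. (d s a * P s a s') * (r s a s' + \<gamma> * Vtheta phi \<theta> s' - phi s a \<bullet> \<theta>)) *\<^sub>R phi s a"
    unfolding ghat_def by (simp add: scaleR_sum_left)
  also have "(\<Sum>s'\<in>UNIV. (d s a * P s a s') * (r s a s' + \<gamma> * Vtheta phi \<theta> s' - phi s a \<bullet> \<theta>))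
     = d s a * ((\<Sum>s'\<in>UNIV. P s a s' * r s a s') + \<gamma> * (\<Sum>s'\<in>UNIV. P s a s' * Vtheta phi \<theta> s')
         - (\<Sum>s'\<in>UNIV. P s a s') * (phi s a \<bullet> \<theta>))"
    by (simp add: algebra_simps sum.distrib sum_subtractf sum_distrib_left sum_distrib_right)
  finally show "(d s a * (Rexp P r s a + \<gamma> * (\<Sum>s'\<in>UNIV. P s a s' * Vtheta phi \<theta> s') - phi s a \<bullet> \<theta>)) *\<^sub>R phi s a
     = (\<Sum>s'\<in>UNIV. (d s a * P s a s') *\<^sub>R ghat r phi \<gamma> s a s' \<theta>)"
    using assms unfolding Rexp_def by simp
qed

lemma gbar_bound:
  fixes phi :: "'s::finite \<Rightarrow> 'a::finite \<Rightarrow> real^'n"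
  assumes Ps: "\<forall>s a. (\<Sum>s'\<in>UNIV. P s a s') = 1" and Pn: "\<forall>s a s'. P s a s' \<ge> 0"
    and dn: "\<forall>s a. d s a > 0" and ds: "(\<Sum>s\<in>UNIV. \<Sum>a\<in>UNIV. d s a) = 1" and g: "0 \<le> \<gamma>"
  shows "norm (gbar P r d phi \<gamma> \<theta>) \<le> phimax phi * (Rmax r + (1 + \<gamma>) * Phi_inf phi ts)
     + (1 + \<gamma>) * (phimax phi)\<^sup>2 * norm (\<theta> - ts)"
proof -
  let ?B = "phimax phi * (Rmax r + (1 + \<gamma>) * Phi_inf phi ts) + (1 + \<gamma>) * (phimax phi)\<^sup>2 * norm (\<theta> - ts)"
  have "norm (gbar P r d phi \<gamma> \<theta>) \<le> (\<Sum>s\<in>UNIV. \<Sum>a\<in>UNIV. \<Sum>s'\<in>UNIV. norm ((d s a * P s a s') *\<^sub>R ghat r phi \<gamma> s a s' \<theta>))"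
    unfolding gbar_eq[OF Ps]
    by (rule order_trans[OF norm_sum], rule sum_mono, rule order_trans[OF norm_sum], rule sum_mono, rule norm_sum)
  also have "\<dots> \<le> (\<Sum>s\<in>UNIV. \<Sum>a\<in>UNIV. \<Sum>s'\<in>UNIV. (d s a * P s a s') * ?B)"
  proof (intro sum_mono)
    fix s a s'
    have "0 \<le> d s a * P s a s'" using Pn dn by (simp add: less_imp_le)
    then show "norm ((d s a * P s a s') *\<^sub>R ghat r phi \<gamma> s a s' \<theta>) \<le> (d s a * P s a s') * ?B"
      using ghat_bound[OF g, where s=s and a=a and s'=s' and \<theta>=\<theta> and ts=ts and r=r and phi=phi] by (simp add: mult_left_mono)
  qed
  also have "\<dots> = ?B"
    using Ps ds by (simp add: sum_distrib_right[symmetric] sum_distrib_left[symmetric] mult.assoc)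
  finally show ?thesis .
qed


lemma pointwise:
  fixes phi :: "'s::finite \<Rightarrow> 'a::finite \<Rightarrow> real^'n"
  assumes Ps: "\<forall>s a. (\<Sum>s'\<in>UNIV. P s a s') = 1" and Pn: "\<forall>s a s'. P s a s' \<ge> 0"
    and dn: "\<forall>s a. d s a > 0" and ds: "(\<Sum>s\<in>UNIV. \<Sum>a\<in>UNIV. d s a) = 1" and g: "0 \<le> \<gamma>"
    and C: "C \<ge> 1"
    and Cb: "\<forall>x. (norm x)\<^sup>2 \<le> Vinf P d phi \<alpha> \<gamma> \<beta> x \<and> Vinf P d phi \<alpha> \<gamma> \<beta> x \<le> C * (norm x)\<^sup>2"
  shows "pnorm P d phi \<alpha> \<gamma> \<beta> (ghat r phi \<gamma> s a s' \<theta> - gbar P r d phi \<gamma> \<theta>)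
     \<le> 2 * sqrt C * phimax phi * (Rmax r + (1 + \<gamma>) * Phi_inf phi ts)
       + 2 * sqrt C * (1 + \<gamma>) * (phimax phi)\<^sup>2 * pnorm P d phi \<alpha> \<gamma> \<beta> (\<theta> - ts)"
proof -
  define B where "B = phimax phi * (Rmax r + (1 + \<gamma>) * Phi_inf phi ts) + (1 + \<gamma>) * (phimax phi)\<^sup>2 * norm (\<theta> - ts)"
  let ?w = "ghat r phi \<gamma> s a s' \<theta> - gbar P r d phi \<gamma> \<theta>"
  have "norm ?w \<le> norm (ghat r phi \<gamma> s a s' \<theta>) + norm (gbar P r d phi \<gamma> \<theta>)" by (rule norm_triangle_ineq4)
  also have "\<dots> \<le> B + B" using ghat_bound[OF g, where s=s and a=a and s'=s' and \<theta>=\<theta> and ts=ts and r=r and phi=phi] gbar_bound[OF Ps Pn dn ds g, where \<theta>=\<theta> and ts=ts and r=r and phi=phi]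
    unfolding B_def by (rule add_mono)
  finally have w: "norm ?w \<le> 2 * B" by simp
  have "pnorm P d phi \<alpha> \<gamma> \<beta> ?w \<le> sqrt (C * (norm ?w)\<^sup>2)"
    unfolding pnorm_def using Cb by (simp add: real_sqrt_le_mono)
  also have "\<dots> = sqrt C * norm ?w" by (simp add: real_sqrt_mult)
  also have "\<dots> \<le> sqrt C * (2 * B)" using w C by (simp add: mult_left_mono)
  finally have pw: "pnorm P d phi \<alpha> \<gamma> \<beta> ?w \<le> sqrt C * (2 * B)" .
  have "norm (\<theta> - ts) = sqrt ((norm (\<theta> - ts))\<^sup>2)" by simp
  also have "\<dots> \<le> pnorm P d phi \<alpha> \<gamma> \<beta> (\<theta> - ts)"
    unfolding pnorm_def using Cb by (simp only: real_sqrt_le_mono)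
  finally have px: "norm (\<theta> - ts) \<le> pnorm P d phi \<alpha> \<gamma> \<beta> (\<theta> - ts)" .
  have "sqrt C * (2 * B) = 2 * sqrt C * phimax phi * (Rmax r + (1 + \<gamma>) * Phi_inf phi ts)
       + 2 * sqrt C * (1 + \<gamma>) * (phimax phi)\<^sup>2 * norm (\<theta> - ts)" unfolding B_def by (simp add: algebra_simps)
  also have "\<dots> \<le> 2 * sqrt C * phimax phi * (Rmax r + (1 + \<gamma>) * Phi_inf phi ts)
       + 2 * sqrt C * (1 + \<gamma>) * (phimax phi)\<^sup>2 * pnorm P d phi \<alpha> \<gamma> \<beta> (\<theta> - ts)"
    using px g C by (intro add_left_mono mult_left_mono) auto
  finally show ?thesis using pw by linarith
qed

definition Xs :: "(nat \<Rightarrow> 'm \<Rightarrow> 's) \<Rightarrow> (nat \<Rightarrow> 'm \<Rightarrow> 'a) \<Rightarrow> (nat \<Rightarrow> 'm \<Rightarrow> 's) \<Rightarrow> nat \<Rightarrow> 'm \<Rightarrow> ('s \<times> 'a \<times> 's) list" where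
  "Xs S Ac S' j \<omega> = map (\<lambda>t. (S t \<omega>, Ac t \<omega>, S' t \<omega>)) [0..<j]"

definition thL where
  "thL r phi \<alpha> \<gamma> \<theta>0 l = fold (\<lambda>(s,a,s') \<theta>. \<theta> + \<alpha> *\<^sub>R ghat r phi \<gamma> s a s' \<theta>) l \<theta>0"

lemma theta_thL: "theta_it r phi \<alpha> \<gamma> \<theta>0 S Ac S' j \<omega> = thL r phi \<alpha> \<gamma> \<theta>0 (Xs S Ac S' j \<omega>)"
  by (induction j) (auto simp: thL_def Xs_def)

lemma Xs_Suc: "Xs S Ac S' (Suc j) \<omega> = Xs S Ac S' j \<omega> @ [(S j \<omega>, Ac j \<omega>, S' j \<omega>)]"
  by (simp add: Xs_def)

lemma length_Xs: "length (Xs S Ac S' j \<omega>) = j" by (simp add: Xs_def)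

lemma filt_facts:
  assumes meas: "\<forall>t. (\<lambda>\<omega>. (S t \<omega>, Ac t \<omega>, S' t \<omega>)) \<in> measurable M (count_space UNIV)"
  shows "subalgebra M (filt M S Ac S' k)"
    and "\<And>t. t < k \<Longrightarrow> (\<lambda>\<omega>. (S t \<omega>, Ac t \<omega>, S' t \<omega>)) \<in> measurable (filt M S Ac S' k) (count_space UNIV)"
proof -
  let ?G = "(\<Union>t\<in>{..<k}. {(\<lambda>\<omega>. (S t \<omega>, Ac t \<omega>, S' t \<omega>)) -` B \<inter> space M | B. True})"
  have Gp: "?G \<subseteq> Pow (space M)" by auto
  have Gs: "?G \<subseteq> sets M" using meas by (auto intro: measurable_sets)
  have sp: "space (filt M S Ac S' k) = space M" unfolding filt_def using Gp by (simp add: space_measure_of_conv)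
  have ss: "sets (filt M S Ac S' k) = sigma_sets (space M) ?G" unfolding filt_def using Gp by (simp add: sets_measure_of)
  show "subalgebra M (filt M S Ac S' k)" unfolding subalgebra_def
    using sp ss Gs using sets.sigma_sets_subset[of ?G M] by simp
  fix t assume t: "t < k"
  show "(\<lambda>\<omega>. (S t \<omega>, Ac t \<omega>, S' t \<omega>)) \<in> measurable (filt M S Ac S' k) (count_space UNIV)"
  proof (rule measurableI)
    fix A
    have "(\<lambda>\<omega>. (S t \<omega>, Ac t \<omega>, S' t \<omega>)) -` A \<inter> space M \<in> ?G" using t by blast
    then show "(\<lambda>\<omega>. (S t \<omega>, Ac t \<omega>, S' t \<omega>)) -` A \<inter> space (filt M S Ac S' k) \<in> sets (filt M S Ac S' k)"
      unfolding sp ss by (rule sigma_sets.Basic)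
  qed auto
qed

lemma Xs_meas:
  fixes S :: "nat \<Rightarrow> 'm \<Rightarrow> 's::finite" and Ac :: "nat \<Rightarrow> 'm \<Rightarrow> 'a::finite"
  assumes "\<And>t. t < j \<Longrightarrow> (\<lambda>\<omega>. (S t \<omega>, Ac t \<omega>, S' t \<omega>)) \<in> measurable N (count_space UNIV)"
  shows "Xs S Ac S' j \<in> measurable N (count_space UNIV)"
  using assms
proof (induction j)
  case 0
  then show ?case by (simp add: Xs_def)
next
  case (Suc j)
  have 1: "(\<lambda>\<omega>. (Xs S Ac S' j \<omega>, (S j \<omega>, Ac j \<omega>, S' j \<omega>))) \<in> measurable N (count_space UNIV \<Otimes>\<^sub>M count_space UNIV)"
    using Suc by (intro measurable_Pair) auto
  have 2: "(count_space UNIV \<Otimes>\<^sub>M count_space UNIV :: (('s \<times> 'a \<times> 's) list \<times> ('s \<times> 'a \<times> 's)) measure) = count_space UNIV"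
    using pair_measure_countable[of "UNIV :: ('s \<times> 'a \<times> 's) list set" "UNIV :: ('s \<times> 'a \<times> 's) set"] by simp
  have 3: "(\<lambda>p. fst p @ [snd p]) \<in> measurable (count_space UNIV :: (('s \<times> 'a \<times> 's) list \<times> ('s \<times> 'a \<times> 's)) measure) (count_space UNIV)"
    by simp
  have "(\<lambda>\<omega>. (\<lambda>p. fst p @ [snd p]) (Xs S Ac S' j \<omega>, (S j \<omega>, Ac j \<omega>, S' j \<omega>))) \<in> measurable N (count_space UNIV)"
    using measurable_comp[OF 1[unfolded 2] 3] by (simp add: comp_def)
  then show ?case by (simp add: Xs_Suc[abs_def])
qed

lemma list_fun_integrable:
  fixes H :: "'m \<Rightarrow> ('x::finite) list" and Fn :: "'x list \<Rightarrow> real"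
  assumes "prob_space M" "H \<in> measurable M (count_space UNIV)" "\<And>\<omega>. length (H \<omega>) = j"
  shows "integrable M (\<lambda>\<omega>. Fn (H \<omega>))"
proof -
  interpret prob_space M by fact
  have fin: "finite {l :: 'x list. length l = j}"
    using finite_lists_length_eq[of "UNIV :: 'x set" j] by simp
  show ?thesis
  proof (rule integrable_const_bound[where B = "Max ((\<lambda>l. \<bar>Fn l\<bar>) ` {l. length l = j})"])
    show "AE \<omega> in M. norm (Fn (H \<omega>)) \<le> Max ((\<lambda>l. \<bar>Fn l\<bar>) ` {l. length l = j})"
      using fin assms(3) by (auto intro!: Max_ge)
    show "(\<lambda>\<omega>. Fn (H \<omega>)) \<in> borel_measurable M"
      using assms(2) by (rule measurable_compose) simp
  qed
qed


theorem lemma5: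
  fixes P :: "'s::finite \<Rightarrow> 'a::finite \<Rightarrow> 's \<Rightarrow> real"
    and r :: "'s \<Rightarrow> 'a \<Rightarrow> 's \<Rightarrow> real"
    and d :: "'s \<Rightarrow> 'a \<Rightarrow> real"
    and phi :: "'s \<Rightarrow> 'a \<Rightarrow> real^'n"
    and \<alpha> \<gamma> \<epsilon> C :: real
    and \<theta>0 \<theta>star :: "real^'n"
    and M :: "'m measure"
    and S S' :: "nat \<Rightarrow> 'm \<Rightarrow> 's"
    and Ac :: "nat \<Rightarrow> 'm \<Rightarrow> 'a"
    and k :: nat
  assumes P_nonneg: "\<forall>s a s'. P s a s' \<ge> 0"
    and P_sum: "\<forall>s a. (\<Sum>s'\<in>UNIV. P s a s') = 1"
    and gamma: "0 < \<gamma>" "\<gamma> < 1"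
    and alpha: "0 < \<alpha>" "\<alpha> < 1"
    and d_pos: "\<forall>s a. d s a > 0"
    and d_sum: "(\<Sum>s\<in>UNIV. \<Sum>a\<in>UNIV. d s a) = 1"
    and full_rank: "\<forall>\<theta>. (\<forall>s a. phi s a \<bullet> \<theta> = 0) \<longrightarrow> \<theta> = 0"
    and rho_lt1: "rho_dir P d phi \<alpha> \<gamma> < 1"
    and fixpt: "gbar P r d phi \<gamma> \<theta>star = 0"
    and eps: "\<epsilon> > 0" "rho_dir P d phi \<alpha> \<gamma> + \<epsilon> < 1"
    and C_ge: "C \<ge> 1"
    and C_bounds: "\<forall>x. (norm x)\<^sup>2 \<le> Vinf P d phi \<alpha> \<gamma> (rho_dir P d phi \<alpha> \<gamma> + \<epsilon>) x
                     \<and> Vinf P d phi \<alpha> \<gamma> (rho_dir P d phi \<alpha> \<gamma> + \<epsilon>) x \<le> C * (norm x)\<^sup>2"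
    and M_prob: "prob_space M"
    and meas: "\<forall>t. (\<lambda>\<omega>. (S t \<omega>, Ac t \<omega>, S' t \<omega>)) \<in> measurable M (count_space UNIV)"
    and indep: "prob_space.indep_vars M (\<lambda>_. count_space UNIV) (\<lambda>t \<omega>. (S t \<omega>, Ac t \<omega>, S' t \<omega>)) UNIV"
    and law: "\<forall>t s a s'. measure M {\<omega> \<in> space M. S t \<omega> = s \<and> Ac t \<omega> = a \<and> S' t \<omega> = s'} = d s a * P s a s'"
  shows "AE \<omega> in M.
     real_cond_exp M (filt M S Ac S' k)
       (\<lambda>\<omega>. pnorm P d phi \<alpha> \<gamma> (rho_dir P d phi \<alpha> \<gamma> + \<epsilon>)
          (ghat r phi \<gamma> (S k \<omega>) (Ac k \<omega>) (S' k \<omega>) (theta_it r phi \<alpha> \<gamma> \<theta>0 S Ac S' k \<omega>)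
           - gbar P r d phi \<gamma> (theta_it r phi \<alpha> \<gamma> \<theta>0 S Ac S' k \<omega>))) \<omega>
     \<le> 2 * sqrt C * phimax phi * (Rmax r + (1 + \<gamma>) * Phi_inf phi \<theta>star)
       + 2 * sqrt C * (1 + \<gamma>) * (phimax phi)\<^sup>2
         * pnorm P d phi \<alpha> \<gamma> (rho_dir P d phi \<alpha> \<gamma> + \<epsilon>) (theta_it r phi \<alpha> \<gamma> \<theta>0 S Ac S' k \<omega> - \<theta>star)"
proof -
  interpret prob_space M by (rule M_prob)
  define \<beta> where "\<beta> = rho_dir P d phi \<alpha> \<gamma> + \<epsilon>"
  define F where "F = filt M S Ac S' k"
  define Fa where "Fa = (\<lambda>l. pnorm P d phi \<alpha> \<gamma> \<beta>
     (ghat r phi \<gamma> (fst (l!k)) (fst (snd (l!k))) (snd (snd (l!k))) (thL r phi \<alpha> \<gamma> \<theta>0 (take k l))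
      - gbar P r d phi \<gamma> (thL r phi \<alpha> \<gamma> \<theta>0 (take k l))))"
  define Gb where "Gb = (\<lambda>l. 2 * sqrt C * phimax phi * (Rmax r + (1 + \<gamma>) * Phi_inf phi \<theta>star)
       + 2 * sqrt C * (1 + \<gamma>) * (phimax phi)\<^sup>2 * pnorm P d phi \<alpha> \<gamma> \<beta> (thL r phi \<alpha> \<gamma> \<theta>0 l - \<theta>star))"
  define f where "f = (\<lambda>\<omega>. pnorm P d phi \<alpha> \<gamma> \<beta>
          (ghat r phi \<gamma> (S k \<omega>) (Ac k \<omega>) (S' k \<omega>) (theta_it r phi \<alpha> \<gamma> \<theta>0 S Ac S' k \<omega>)
           - gbar P r d phi \<gamma> (theta_it r phi \<alpha> \<gamma> \<theta>0 S Ac S' k \<omega>)))"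
  define g where "g = (\<lambda>\<omega>. 2 * sqrt C * phimax phi * (Rmax r + (1 + \<gamma>) * Phi_inf phi \<theta>star)
       + 2 * sqrt C * (1 + \<gamma>) * (phimax phi)\<^sup>2
         * pnorm P d phi \<alpha> \<gamma> \<beta> (theta_it r phi \<alpha> \<gamma> \<theta>0 S Ac S' k \<omega> - \<theta>star))"
  have f_eq: "f = (\<lambda>\<omega>. Fa (Xs S Ac S' (Suc k) \<omega>))"
    unfolding f_def Fa_def by (intro ext) (simp add: Xs_Suc theta_thL nth_append length_Xs)
  have g_eq: "g = (\<lambda>\<omega>. Gb (Xs S Ac S' k \<omega>))"
    unfolding g_def Gb_def by (intro ext) (simp add: theta_thL)
  have sub: "subalgebra M F" unfolding F_def by (rule filt_facts(1)[OF meas])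
  have XF: "Xs S Ac S' k \<in> measurable F (count_space UNIV)"
    unfolding F_def by (rule Xs_meas, rule filt_facts(2)[OF meas])
  have XM: "Xs S Ac S' j \<in> measurable M (count_space UNIV)" for j
    by (rule Xs_meas) (use meas in auto)
  have fint: "integrable M f" unfolding f_eq
    by (rule list_fun_integrable[OF M_prob XM length_Xs])
  have gint: "integrable M g" unfolding g_eq
    by (rule list_fun_integrable[OF M_prob XM length_Xs])
  have gF: "g \<in> borel_measurable F" unfolding g_eq
    using XF by (rule measurable_compose) simp
  have fg: "f \<omega> \<le> g \<omega>" for \<omega>
    unfolding f_def g_def
    by (rule pointwise[OF P_sum P_nonneg d_pos d_sum _ C_ge]) (use gamma C_bounds \<beta>_def in auto)
  have "finite_measure_subalgebra M F"
    unfolding finite_measure_subalgebra_def finite_measure_subalgebra_axioms_def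
    using sub finite_measure_axioms by blast
  then interpret finite_measure_subalgebra M F .
  have 1: "AE \<omega> in M. real_cond_exp M F f \<omega> \<le> real_cond_exp M F g \<omega>"
    by (rule real_cond_exp_mono[OF _ fint gint]) (simp add: fg)
  have 2: "AE \<omega> in M. real_cond_exp M F g \<omega> = g \<omega>"
    by (rule real_cond_exp_F_meas[OF gint gF])
  have "AE \<omega> in M. real_cond_exp M F f \<omega> \<le> g \<omega>"
    using 1 2 by eventually_elim simp
  then show ?thesis unfolding F_def f_def g_def \<beta>_def .
qed

end
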